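(* Consider the triggered urn model described in the context, with trigger probabilities $(p_n)_{n\ge1}\subset(0,1)$ and the convention $p_0=1$. Let $C_n=\sum_{i=0}^{n-1}B_i$ be the number of distinct colors present in the urn at time $n$, and $C_\infty=\sup_n C_n$. Then: (1) If $\sum_{n=0}^\infty p_n<\infty$, then $C_\infty<\infty$ almost surely. (2) If $\sum_{n=0}^\infty p_n=\infty$, then $C_\infty=\infty$ almost surely and $C_n\big/\sum_{i=0}^{n-1}p_i\to 1$ almost surely. In particular, if moreover $\sum_{n=1}^\infty(1-p_n)<\infty$, then there exists an (almost surely finite) random time $N$ such that for every time $n\ge N$ a new color is observed; hence each color is observed only a finite number of times, and only finitely many colors end up being observed more than once.
   Context: Triggered (FAQ) urn model. The urn is empty at time $0$. Let $B_0=1$ and let $(B_n)_{n\ge1}$ be independent Bernoulli random variables with $\Pr(B_n=1)=p_n\in(0,1)$ (write $p_0=1$); the $B$'s are independent of everything else in the construction. Let $F:[1,\infty)\to[0,\infty)$ be strictly increasing with $F(1)>0$ (the update function). Colors are labelled $1,2,\dots$ in order of first appearance, and a history sequence $\mathcal S=(S_n)_{n\ge1}$ records one color per time step. For a color $c$, $K_{n,c}$ denotes the number of times $c$ has been registered in $\mathcal S$ up to and including time $n$; at time $n$ the urn contains, for each color $c$ already present, a weight (number of balls) $F(K_{n,c})$. At each time $n\ge1$: if $B_{n-1}=1$ (trigger), a new color (not yet present) is added with weight $F(1)$ and registered in $\mathcal S$; if $B_{n-1}=0$, a color $c$ among those present is drawn with probability $F(K_{n-1,c})/\sum_{c'}F(K_{n-1,c'})$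 (sum over colors present at time $n-1$), it is registered in $\mathcal S$, and its weight becomes $F(K_{n,c})$. *)

theory Defs
  imports "HOL-Probability.Probability"
begin

definition num_colors :: "(nat \<Rightarrow> 'a \<Rightarrow> bool) \<Rightarrow> nat \<Rightarrow> 'a \<Rightarrow> nat" where
  "num_colors B n \<omega> = (\<Sum>i<n. if B i \<omega> then 1 else 0)"

definition hist :: "(nat \<Rightarrow> 'a \<Rightarrow> nat) \<Rightarrow> nat \<Rightarrow> 'a \<Rightarrow> nat list" where
  "hist S k \<omega> = map (\<lambda>i. S i \<omega>) [1..<Suc k]"

definition trig_hist :: "(nat \<Rightarrow> 'a \<Rightarrow> bool) \<Rightarrow> nat \<Rightarrow> 'a \<Rightarrow> bool list" where
  "trig_hist B k \<omega> = map (\<lambda>i. B i \<omega>) [0..<k]"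

definition reg_count :: "nat list \<Rightarrow> nat \<Rightarrow> nat" where
  "reg_count h c = length (filter (\<lambda>x. x = c) h)"

text \<open>Probability of drawing colour c from the urn whose content is described by history h:
  F(K_c) / sum over present colours c' of F(K_c').\<close>
definition urn_prob :: "(real \<Rightarrow> real) \<Rightarrow> nat list \<Rightarrow> nat \<Rightarrow> real" where
  "urn_prob F h c =
     (if c \<in> set h then F (real (reg_count h c)) / (\<Sum>c'\<in>set h. F (real (reg_count h c'))) else 0)"

end

theory Submission
  imports Defs
begin


context prob_space begin

lemma pair_moment:
  assumes [measurable]: "Ai \<in> events" "Aj \<in> events"
  shows "expectation (\<lambda>\<omega>. (indicator Ai \<omega> - prob Ai) * (indicator Aj \<omega> - prob Aj))
     = prob (Ai \<inter> Aj) - prob Ai * prob Aj"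
proof -
  have eq: "(\<lambda>\<omega>. (indicator Ai \<omega> - prob Ai) * (indicator Aj \<omega> - prob Aj)) =
     (\<lambda>\<omega>. indicator (Ai \<inter> Aj) \<omega> - prob Aj * indicator Ai \<omega> - prob Ai * indicator Aj \<omega> + prob Ai * prob Aj :: real)"
    by (auto simp: indicator_def fun_eq_iff algebra_simps)
  have [simp]: "Ai \<inter> space M = Ai" "Aj \<inter> space M = Aj" "Ai \<inter> Aj \<inter> space M = Ai \<inter> Aj"
    using sets.sets_into_space assms by auto
  have i1: "integrable M (indicator Ai :: _ \<Rightarrow> real)" "integrable M (indicator Aj :: _ \<Rightarrow> real)"
     "integrable M (indicator (Ai \<inter> Aj) :: _ \<Rightarrow> real)"
    using assms by (auto intro!: integrable_real_indicator simp: less_top[symmetric])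
  show ?thesis unfolding eq
    apply (subst Bochner_Integration.integral_add)
    using i1 apply (auto intro!: Bochner_Integration.integrable_diff)[2]
    apply (subst Bochner_Integration.integral_diff)
    using i1 apply (auto intro!: Bochner_Integration.integrable_diff)[2]
    apply (subst Bochner_Integration.integral_diff)
    using i1 apply (auto)[2]
    apply (simp add: prob_space)
    done
qed

lemma pair_int:
  assumes [measurable]: "Ai \<in> events" "Aj \<in> events"
  shows "integrable M (\<lambda>\<omega>. (indicator Ai \<omega> - prob Ai) * (indicator Aj \<omega> - prob Aj :: real))"
proof -
  have eq: "(\<lambda>\<omega>. (indicator Ai \<omega> - prob Ai) * (indicator Aj \<omega> - prob Aj)) =
     (\<lambda>\<omega>. indicator (Ai \<inter> Aj) \<omega> - prob Aj * indicator Ai \<omega> - prob Ai * indicator Aj \<omega> + prob Ai * prob Aj :: real)"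
    by (auto simp: indicator_def fun_eq_iff algebra_simps)
  have i1: "integrable M (indicator Ai :: _ \<Rightarrow> real)" "integrable M (indicator Aj :: _ \<Rightarrow> real)"
     "integrable M (indicator (Ai \<inter> Aj) :: _ \<Rightarrow> real)"
    using assms by (auto intro!: integrable_real_indicator simp: less_top[symmetric])
  show ?thesis unfolding eq using i1 by auto
qed

lemma sum_sq_int:
  assumes [measurable]: "\<And>i. A i \<in> events"
  shows "integrable M (\<lambda>\<omega>. (\<Sum>i<(n::nat). indicator (A i) \<omega> - prob (A i))\<^sup>2 :: real)"
proof -
  have eq: "(\<lambda>\<omega>. (\<Sum>i<n. indicator (A i) \<omega> - prob (A i))\<^sup>2) =
     (\<lambda>\<omega>. \<Sum>i<n. \<Sum>j<n. (indicator (A i) \<omega> - prob (A i)) * (indicator (A j) \<omega> - prob (A j)) :: real)"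
    by (simp add: power2_eq_square sum_product)
  show ?thesis unfolding eq
    by (intro Bochner_Integration.integrable_sum pair_int assms)
qed

lemma sum_moment:
  assumes [measurable]: "\<And>i. A i \<in> events"
    and ind: "\<And>i j. i \<noteq> j \<Longrightarrow> prob (A i \<inter> A j) = prob (A i) * prob (A j)"
  shows "expectation (\<lambda>\<omega>. (\<Sum>i<(n::nat). indicator (A i) \<omega> - prob (A i))\<^sup>2) \<le> (\<Sum>i<n. prob (A i))"
proof -
  have eq: "(\<lambda>\<omega>. (\<Sum>i<n. indicator (A i) \<omega> - prob (A i))\<^sup>2) =
     (\<lambda>\<omega>. \<Sum>i<n. \<Sum>j<n. (indicator (A i) \<omega> - prob (A i)) * (indicator (A j) \<omega> - prob (A j)) :: real)"
    by (simp add: power2_eq_square sum_product)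
  have "expectation (\<lambda>\<omega>. (\<Sum>i<n. indicator (A i) \<omega> - prob (A i))\<^sup>2)
     = (\<Sum>i<n. \<Sum>j<n. prob (A i \<inter> A j) - prob (A i) * prob (A j))"
    unfolding eq
    apply (subst Bochner_Integration.integral_sum)
     apply (rule Bochner_Integration.integrable_sum, simp add: pair_int)
    apply (intro sum.cong refl)
    apply (subst Bochner_Integration.integral_sum)
     apply (simp add: pair_int)
    apply (simp add: pair_moment)
    done
  also have "\<dots> = (\<Sum>i<n. \<Sum>j<n. if i = j then prob (A i) - prob (A i) * prob (A i) else 0)"
    by (intro sum.cong refl) (auto simp: ind)
  also have "\<dots> = (\<Sum>i<n. prob (A i) - prob (A i) * prob (A i))"
    by (intro sum.cong refl) (subst sum.delta'[where b="\<lambda>_. _"], auto)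
  also have "\<dots> \<le> (\<Sum>i<n. prob (A i))"
    by (intro sum_mono) simp
  finally show ?thesis .
qed

end


lemma arith_up:
  fixes e d k x y z :: real
  assumes "0 < e" "e \<le> 1" "0 \<le> d" "d \<le> e/4" "1 \<le> k" "20 \<le> e * k"
    and "x < (1 + d) * y" "y \<le> (k+1)^2 + 1" "k^2 \<le> z" "0 \<le> y"
  shows "x < (1 + e) * z"
proof -
  have k1: "20 * k \<le> e * k * k" using assms by (intro mult_right_mono) auto
  have e1: "(k+1)^2 + 1 = k*k + 2*k + 2" "(1 + e/4) * k^2 = k*k + (e*k*k)/4"
    by (simp_all add: power2_eq_square algebra_simps)
  have A: "(k+1)^2 + 1 \<le> (1 + e/4) * k^2"
    unfolding e1 using k1 assms by linarith
  have ee: "e * e \<le> e" using assms by (simp add: mult_left_le)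
  have "x < (1 + d) * y" by fact
  also have "\<dots> \<le> (1 + e/4) * ((1 + e/4) * k^2)"
    using assms A by (intro mult_mono) auto
  also have "\<dots> = (1 + e/4)^2 * k^2" by (simp add: power2_eq_square)
  also have "\<dots> \<le> (1 + e) * k^2"
  proof (intro mult_right_mono)
    have "(1 + e/4)^2 = 1 + e/2 + e*e/16" by (simp add: power2_eq_square algebra_simps)
    then show "(1 + e/4)^2 \<le> 1 + e" using ee assms by linarith
  qed simp
  also have "\<dots> \<le> (1 + e) * z"
    using assms by (intro mult_left_mono) auto
  finally show ?thesis .
qed

lemma arith_low:
  fixes e d k x y z :: real
  assumes "0 < e" "e \<le> 1" "0 \<le> d" "d \<le> e/4" "1 \<le> k" "20 \<le> e * k"
    and "(1 - d) * y < x" "k^2 \<le> y" "z < (k+1)^2" "0 \<le> z"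
  shows "(1 - e) * z < x"
proof -
  have k1: "20 * k \<le> e * k * k" using assms by (intro mult_right_mono) auto
  have e1: "(1 - e/4) * (k+1)^2 = k*k + 2*k + 1 - (e*k*k)/4 - (e*k)/2 - e/4" "k^2 = k*k"
    by (simp_all add: power2_eq_square algebra_simps)
  have A: "(1 - e/4) * (k+1)^2 \<le> k^2"
    unfolding e1 using k1 assms by linarith
  have ee: "0 \<le> e * e" by simp
  have "(1 - e) * z \<le> (1 - e/4)^2 * z"
    using ee assms by (intro mult_right_mono) (auto simp: power2_eq_square algebra_simps)
  also have "\<dots> \<le> (1 - e/4)^2 * (k+1)^2"
    using assms by (intro mult_left_mono) auto
  also have "\<dots> = (1 - e/4) * ((1 - e/4) * (k+1)^2)" by (simp add: power2_eq_square)
  also have "\<dots> \<le> (1 - d) * y"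
    using assms A by (intro mult_mono) auto
  also have "\<dots> < x" by fact
  finally show ?thesis .
qed

lemma det_ratio:
  fixes a C :: "nat \<Rightarrow> real" and ns :: "nat \<Rightarrow> nat"
  assumes amono: "mono a" and a0: "\<And>n. 0 \<le> a n" and Cmono: "mono C"
    and ns_ge: "\<And>k. real k ^ 2 \<le> a (ns k)"
    and ns_least: "\<And>k n. real k ^ 2 \<le> a n \<Longrightarrow> ns k \<le> n"
    and ns_le: "\<And>k. k \<ge> 1 \<Longrightarrow> a (ns k) \<le> real k ^ 2 + 1"
    and ev: "\<And>m. \<exists>K. \<forall>k\<ge>K. \<bar>C (ns k) - a (ns k)\<bar> < a (ns k) / (real m + 1)"
  shows "(\<lambda>n. C n / a n) \<longlonglongrightarrow> 1"
proof (rule LIMSEQ_I)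
  fix r :: real assume r: "0 < r"
  define e where "e = min r 1"
  have e: "0 < e" "e \<le> 1" "e \<le> r" using r by (auto simp: e_def)
  define m where "m = nat \<lceil>4/e\<rceil>"
  have m: "4/e \<le> real m + 1" unfolding m_def by linarith
  define d where "d = 1/(real m + 1)"
  have d: "0 \<le> d" "d \<le> e/4"
  proof -
    show "0 \<le> d" unfolding d_def by simp
    have "1/(real m + 1) \<le> 1/(4/e)" using m e by (intro divide_left_mono) auto
    then show "d \<le> e/4" unfolding d_def by simp
  qed
  obtain K0 where K0: "\<forall>k\<ge>K0. \<bar>C (ns k) - a (ns k)\<bar> < a (ns k) / (real m + 1)" using ev by blast
  define K where "K = max (max K0 (nat \<lceil>20/e\<rceil>)) 1"
  have K: "K0 \<le> K" "1 \<le> K" "20 / e \<le> real K" unfolding K_def by auto linarith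
  have eK: "20 \<le> e * real K" using K(3) e by (simp add: field_simps)
  show "\<exists>no. \<forall>n\<ge>no. norm (C n / a n - 1) < r"
  proof (intro exI allI impI)
    fix n assume n: "ns K \<le> n"
    have an: "real K ^ 2 \<le> a n" using ns_ge[of K] amono n unfolding mono_def by (meson order_trans)
    define k where "k = nat \<lfloor>sqrt (a n)\<rfloor>"
    have sq0: "0 \<le> sqrt (a n)" using a0 by simp
    have kle: "real k \<le> sqrt (a n)" unfolding k_def using sq0
      by (metis of_nat_floor)
    have klt: "sqrt (a n) < real k + 1"
    proof -
      have "real k = of_int \<lfloor>sqrt (a n)\<rfloor>" unfolding k_def using sq0 by simp
      then show ?thesis using real_of_int_floor_add_one_gt[of "sqrt (a n)"] by linarith
    qed
    have k1: "real k ^ 2 \<le> a n"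
      using power_mono[OF kle, of 2] a0 by simp
    have k2: "a n < (real k + 1)^2"
      using power_strict_mono[OF klt sq0, of 2] a0 by simp
    have "real K \<le> sqrt (a n)" using an by (simp add: real_le_rsqrt)
    then have kK: "K \<le> k" unfolding k_def
      by (metis le_nat_floor of_nat_le_iff)
    have ek: "20 \<le> e * real k" using eK kK e
      by (meson mult_left_mono of_nat_le_iff order_trans less_imp_le)
    have lo: "ns k \<le> n" by (rule ns_least[OF k1])
    have hi: "n \<le> ns (Suc k)"
    proof (rule ccontr)
      assume "\<not> n \<le> ns (Suc k)"
      then have "a (ns (Suc k)) \<le> a n" using amono unfolding mono_def by simp
      moreover have "(real k + 1)^2 \<le> a (ns (Suc k))" using ns_ge[of "Suc k"] by (simp add: add.commute)
      ultimately show False using k2 by linarith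
    qed
    have c1: "C (ns k) \<le> C n" "C n \<le> C (ns (Suc k))"
      using Cmono lo hi unfolding mono_def by auto
    have b1: "\<bar>C (ns k) - a (ns k)\<bar> < a (ns k) * d"
      using K0 K kK unfolding d_def by auto
    have b2: "\<bar>C (ns (Suc k)) - a (ns (Suc k))\<bar> < a (ns (Suc k)) * d"
      using K0 K kK unfolding d_def by auto
    have l1: "(1 - d) * a (ns k) < C n" using b1 c1 by (simp add: algebra_simps abs_less_iff)
    have u1: "C n < (1 + d) * a (ns (Suc k))" using b2 c1 by (simp add: algebra_simps abs_less_iff)
    have kk: "1 \<le> real k" using kK K by simp
    have y1: "a (ns (Suc k)) \<le> (real k + 1)^2 + 1" using ns_le[of "Suc k"] by (simp add: add.commute)
    have y2: "real k ^ 2 \<le> a (ns k)" using ns_ge[of k] by simp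
    have U: "C n < (1 + e) * a n"
      by (rule arith_up[OF e(1,2) d kk ek u1 y1 k1 a0])
    have L: "(1 - e) * a n < C n"
      by (rule arith_low[OF e(1,2) d kk ek l1 y2 k2 a0])
    have "1 \<le> real K ^ 2" using K by simp
    then have apos: "0 < a n" using an by linarith
    have q1: "C n / a n < 1 + e" using U apos by (simp add: divide_less_eq mult.commute)
    have q2: "1 - e < C n / a n" using L apos by (simp add: less_divide_eq mult.commute)
    have "\<bar>C n / a n - 1\<bar> < e"
      using q1 q2 by linarith
    then show "norm (C n / a n - 1) < r" using e by simp
  qed
qed



lemma hist_eq_iff: "hist S k \<omega> = h \<longleftrightarrow> length h = k \<and> (\<forall>i<k. S (Suc i) \<omega> = h ! i)"
  unfolding hist_def list_eq_iff_nth_eq by (auto simp del: upt_Suc simp: nth_upt)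

lemma trig_hist_eq_iff: "trig_hist B k \<omega> = bs \<longleftrightarrow> length bs = k \<and> (\<forall>i<k. B i \<omega> = bs ! i)"
  unfolding trig_hist_def list_eq_iff_nth_eq by auto

lemma num_colors_Suc: "num_colors B (Suc n) \<omega> = num_colors B n \<omega> + (if B n \<omega> then 1 else 0)"
  unfolding num_colors_def by simp

lemma num_colors_mono: "m \<le> n \<Longrightarrow> num_colors B m \<omega> \<le> num_colors B n \<omega>"
  unfolding num_colors_def by (intro sum_mono2) auto

lemma S_bound:
  fixes S :: "nat \<Rightarrow> nat"
  assumes trig: "\<And>n. n \<ge> 1 \<Longrightarrow> B (n - 1) \<Longrightarrow> S n = (\<Sum>i<n. if B i then 1 else 0)"
    and dr: "\<And>n. n \<ge> 1 \<Longrightarrow> \<not> B (n - 1) \<Longrightarrow> \<exists>j. 1 \<le> j \<and> j < n \<and> S n = S j"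
  shows "n \<ge> 1 \<Longrightarrow> S n \<le> (\<Sum>i<n. if B i then 1 else 0::nat)"
proof (induction n rule: less_induct)
  case (less n)
  show ?case
  proof (cases "B (n - 1)")
    case True then show ?thesis using trig less by simp
  next
    case False
    then obtain j where j: "1 \<le> j" "j < n" "S n = S j" using dr less by blast
    have "S j \<le> (\<Sum>i<j. if B i then 1 else 0::nat)" using less j by simp
    also have "\<dots> \<le> (\<Sum>i<n. if B i then 1 else 0::nat)" using j by (intro sum_mono2) auto
    finally show ?thesis using j by simp
  qed
qed



lemma two_elems:
  fixes T :: "nat set"
  assumes "2 \<le> card T" shows "\<exists>x y. x \<in> T \<and> y \<in> T \<and> x < y"
proof -
  have fin: "finite T" using assms card.infinite by force
  have ne: "T \<noteq> {}" using assms by auto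
  define x where "x = Min T"
  have x: "x \<in> T" using fin ne unfolding x_def by simp
  have "card (T - {x}) \<ge> 1" using assms x fin by simp
  then obtain y where y: "y \<in> T - {x}" by (metis card.empty ex_in_conv not_one_le_zero)
  have "x \<le> y" using y fin unfolding x_def by simp
  then show ?thesis using x y by (intro exI[of _ x] exI[of _ y]) auto
qed

lemma fin_part:
  fixes s :: "nat \<Rightarrow> nat"
  assumes new: "\<forall>n\<ge>N. s n \<notin> s ` {1..<n}"
  shows "\<forall>c. finite {n. n \<ge> 1 \<and> s n = c}" and "finite {c. 2 \<le> card {n. n \<ge> 1 \<and> s n = c}}"
proof -
  have key: "\<not> (n1 \<ge> 1 \<and> N \<le> n1 \<and> n1 < n2 \<and> s n1 = s n2)" for n1 n2
  proof
    assume h: "n1 \<ge> 1 \<and> N \<le> n1 \<and> n1 < n2 \<and> s n1 = s n2"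
    then have "s n2 \<in> s ` {1..<n2}" by (metis atLeastLessThan_iff image_eqI)
    then show False using new h by auto
  qed
  show "\<forall>c. finite {n. n \<ge> 1 \<and> s n = c}"
  proof
    fix c
    show "finite {n. n \<ge> 1 \<and> s n = c}"
    proof (cases "\<exists>n0. n0 \<ge> 1 \<and> s n0 = c \<and> N \<le> n0")
      case True
      then obtain n0 where n0: "n0 \<ge> 1" "s n0 = c" "N \<le> n0" by blast
      have "{n. n \<ge> 1 \<and> s n = c} \<subseteq> {..n0}"
        using key[of n0] n0 by (auto simp: not_le) (metis not_le)
      then show ?thesis using finite_subset by blast
    next
      case False
      then have "{n. n \<ge> 1 \<and> s n = c} \<subseteq> {..<N}" by (auto simp: not_le)
      then show ?thesis using finite_subset by blast
    qed
  qed
  have "{c. 2 \<le> card {n. n \<ge> 1 \<and> s n = c}} \<subseteq> s ` {1..<N}"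
  proof
    fix c assume "c \<in> {c. 2 \<le> card {n. n \<ge> 1 \<and> s n = c}}"
    then obtain x y where xy: "x \<ge> 1" "s x = c" "y \<ge> 1" "s y = c" "x < y"
      using two_elems by fastforce
    have "x < N" using key[of x y] xy by auto
    then show "c \<in> s ` {1..<N}" using xy by auto
  qed
  then show "finite {c. 2 \<le> card {n. n \<ge> 1 \<and> s n = c}}" using finite_subset by blast
qed



theorem theorem3p1:
  fixes M :: "'a measure" and p :: "nat \<Rightarrow> real" and F :: "real \<Rightarrow> real"
    and B :: "nat \<Rightarrow> 'a \<Rightarrow> bool" and S :: "nat \<Rightarrow> 'a \<Rightarrow> nat"
  assumes prob: "prob_space M"
    and p0: "p 0 = 1"
    and p_bounds: "\<And>n. n \<ge> 1 \<Longrightarrow> 0 < p n \<and> p n < 1"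
    and F_mono: "strict_mono_on {1..} F"
    and F_nonneg: "\<And>x. x \<ge> 1 \<Longrightarrow> F x \<ge> 0"
    and F_1: "F 1 > 0"
    and B_meas: "\<And>n. B n \<in> measurable M (count_space UNIV)"
    and S_meas: "\<And>n. S n \<in> measurable M (count_space UNIV)"
    and B0: "\<And>\<omega>. \<omega> \<in> space M \<Longrightarrow> B 0 \<omega>"
    and B_law: "\<And>n. measure M {\<omega> \<in> space M. B n \<omega>} = p n"
    and B_indep: "prob_space.indep_vars M (\<lambda>_. count_space UNIV) B UNIV"
    and B_indep_past: "\<And>n h bs. measure M {\<omega> \<in> space M. B n \<omega> \<and> hist S n \<omega> = h \<and> trig_hist B n \<omega> = bs}
        = p n * measure M {\<omega> \<in> space M. hist S n \<omega> = h \<and> trig_hist B n \<omega> = bs}"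
    and trigger: "\<And>n \<omega>. n \<ge> 1 \<Longrightarrow> \<omega> \<in> space M \<Longrightarrow> B (n - 1) \<omega> \<Longrightarrow> S n \<omega> = num_colors B n \<omega>"
    and draw: "\<And>n h bs c. n \<ge> 1 \<Longrightarrow> length bs = n \<Longrightarrow> \<not> bs ! (n - 1) \<Longrightarrow>
        measure M {\<omega> \<in> space M. hist S (n - 1) \<omega> = h \<and> trig_hist B n \<omega> = bs \<and> S n \<omega> = c}
        = measure M {\<omega> \<in> space M. hist S (n - 1) \<omega> = h \<and> trig_hist B n \<omega> = bs} * urn_prob F h c"
  shows "(summable p \<longrightarrow>
            (AE \<omega> in M. (SUP n. enat (num_colors B n \<omega>)) < \<infinity>))
       \<and> (\<not> summable p \<longrightarrow>
            (AE \<omega> in M. (SUP n. enat (num_colors B n \<omega>)) = \<infinity>)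
          \<and> (AE \<omega> in M. (\<lambda>n. real (num_colors B n \<omega>) / (\<Sum>i<n. p i)) \<longlonglongrightarrow> 1)
          \<and> (summable (\<lambda>n. 1 - p n) \<longrightarrow>
               (AE \<omega> in M. (\<exists>N. \<forall>n\<ge>N. n \<ge> 1 \<and> S n \<omega> \<notin> (\<lambda>m. S m \<omega>) ` {1..<n})
                 \<and> (\<forall>c. finite {n. n \<ge> 1 \<and> S n \<omega> = c})
                 \<and> finite {c. card {n. n \<ge> 1 \<and> S n \<omega> = c} \<ge> 2})))"
proof -
  interpret P: prob_space M by (rule prob)
  have [measurable]: "B n \<in> measurable M (count_space UNIV)" "S n \<in> measurable M (count_space UNIV)" for n
    using B_meas S_meas by auto
  define A where "A i = {\<omega> \<in> space M. B i \<omega>}" for i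
  have A_ev[measurable]: "A i \<in> sets M" for i unfolding A_def by measurable
  have pA: "P.prob (A i) = p i" for i unfolding A_def by (rule B_law)
  have p_nn: "0 \<le> p i" "p i \<le> 1" for i using p_bounds[of i] p0 by (cases "i = 0"; auto)+
  have indep: "P.prob (A i \<inter> A j) = P.prob (A i) * P.prob (A j)" if "i \<noteq> j" for i j
  proof -
    have "P.prob (\<Inter>k\<in>{i,j}. B k -` {True} \<inter> space M) = (\<Prod>k\<in>{i,j}. P.prob (B k -` {True} \<inter> space M))"
      by (rule P.indep_varsD[OF B_indep]) auto
    moreover have "B k -` {True} \<inter> space M = A k" for k unfolding A_def by auto
    ultimately show ?thesis using that by simp
  qed
  have Csum: "real (num_colors B n \<omega>) = (\<Sum>i<n. indicator (A i) \<omega>)" if "\<omega> \<in> space M" for n \<omega>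
    unfolding num_colors_def A_def using that
    by (simp only: of_nat_sum) (intro sum.cong refl, auto simp: indicator_def)
  define ap where "ap n = (\<Sum>i<n. p i)" for n
  have ap_mono: "mono ap" unfolding ap_def mono_def using p_nn by (auto intro!: sum_mono2)
  have ap_nn: "0 \<le> ap n" for n unfolding ap_def using p_nn by (simp add: sum_nonneg)
  have colors_mono: "mono (\<lambda>n. real (num_colors B n \<omega>))" for \<omega>
    unfolding mono_def by (auto intro: num_colors_mono)

  have part1: "AE \<omega> in M. (SUP n. enat (num_colors B n \<omega>)) < \<infinity>" if sp: "summable p"
  proof -
    have "AE \<omega> in M. eventually (\<lambda>n. \<omega> \<in> space M - A n) sequentially"
      by (rule borel_cantelli_AE1) (auto simp: pA sp P.emeasure_eq_measure)
    then show ?thesis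
    proof (rule AE_mp, intro AE_I2 impI)
      fix \<omega> assume \<omega>: "\<omega> \<in> space M" and ev: "eventually (\<lambda>n. \<omega> \<in> space M - A n) sequentially"
      then obtain N where N: "\<And>n. n \<ge> N \<Longrightarrow> \<not> B n \<omega>" unfolding eventually_sequentially A_def by auto
      have stay: "num_colors B (N + j) \<omega> = num_colors B N \<omega>" for j
        by (induction j) (auto simp: num_colors_Suc N)
      have bd: "num_colors B n \<omega> \<le> num_colors B N \<omega>" for n
      proof -
        have "num_colors B n \<omega> \<le> num_colors B (N + (max n N - N)) \<omega>" by (intro num_colors_mono) auto
        then show ?thesis using stay[of "max n N - N"] by (simp del: max_def)
      qed
      have "(SUP n. enat (num_colors B n \<omega>)) \<le> enat (num_colors B N \<omega>)"
        by (intro SUP_least) (simp add: bd)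
      also have "\<dots> < \<infinity>" by simp
      finally show "(SUP n. enat (num_colors B n \<omega>)) < \<infinity>" .
    qed
  qed

  have nullS: "AE \<omega> in M. \<forall>x::nat \<times> nat list \<times> bool list \<times> nat. case x of (n,h,bs,c) \<Rightarrow>
      (n \<ge> 1 \<and> length bs = n \<and> \<not> bs!(n-1) \<and> c \<notin> set h) \<longrightarrow>
      \<not> (hist S (n-1) \<omega> = h \<and> trig_hist B n \<omega> = bs \<and> S n \<omega> = c)"
    unfolding AE_all_countable
  proof
    fix x :: "nat \<times> nat list \<times> bool list \<times> nat"
    obtain n h bs c where x: "x = (n,h,bs,c)" by (cases x)
    show "AE \<omega> in M. case x of (n,h,bs,c) \<Rightarrow>
      (n \<ge> 1 \<and> length bs = n \<and> \<not> bs!(n-1) \<and> c \<notin> set h) \<longrightarrow>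
      \<not> (hist S (n-1) \<omega> = h \<and> trig_hist B n \<omega> = bs \<and> S n \<omega> = c)"
    proof (cases "n \<ge> 1 \<and> length bs = n \<and> \<not> bs!(n-1) \<and> c \<notin> set h")
      case True
      define N where "N = {\<omega> \<in> space M. hist S (n-1) \<omega> = h \<and> trig_hist B n \<omega> = bs \<and> S n \<omega> = c}"
      have Nm: "N \<in> sets M" unfolding N_def hist_eq_iff trig_hist_eq_iff by measurable
      have "measure M N = 0" unfolding N_def using True
        by (subst draw) (auto simp: urn_prob_def)
      then have "N \<in> null_sets M" using Nm by (auto intro!: null_setsI simp: P.emeasure_eq_measure)
      then have "AE \<omega> in M. \<omega> \<notin> N" by (rule AE_not_in)
      then show ?thesis unfolding x by (rule AE_mp) (auto simp: N_def)
    qed (auto simp: x)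
  qed
  have Sbd: "AE \<omega> in M. \<forall>n\<ge>1. S n \<omega> \<le> num_colors B n \<omega>"
    using nullS
  proof (rule AE_mp, intro AE_I2 impI allI)
    fix \<omega> and n :: nat assume \<omega>: "\<omega> \<in> space M" and H: "\<forall>x::nat \<times> nat list \<times> bool list \<times> nat. case x of (n,h,bs,c) \<Rightarrow>
      (n \<ge> 1 \<and> length bs = n \<and> \<not> bs!(n-1) \<and> c \<notin> set h) \<longrightarrow>
      \<not> (hist S (n-1) \<omega> = h \<and> trig_hist B n \<omega> = bs \<and> S n \<omega> = c)"
    assume n1: "1 \<le> n"
    show "S n \<omega> \<le> num_colors B n \<omega>"
      unfolding num_colors_def
    proof (rule S_bound[where B = "\<lambda>i. B i \<omega>" and S = "\<lambda>n. S n \<omega>", OF _ _ n1])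
      fix k assume k: "1 \<le> k" "B (k - 1) \<omega>"
      then show "S k \<omega> = (\<Sum>i<k. if B i \<omega> then 1 else 0)"
        using trigger[OF k(1) \<omega> k(2)] unfolding num_colors_def by simp
    next
      fix k assume k: "1 \<le> k" "\<not> B (k - 1) \<omega>"
      have "\<not> (S k \<omega> \<notin> set (hist S (k-1) \<omega>))"
        using H[rule_format, of "(k, hist S (k-1) \<omega>, trig_hist B k \<omega>, S k \<omega>)"] k
        by (auto simp: trig_hist_def)
      then have "S k \<omega> \<in> set (hist S (k-1) \<omega>)" by simp
      moreover have "set (hist S (k-1) \<omega>) = (\<lambda>i. S i \<omega>) ` {1..<k}"
        using k by (simp add: hist_def)
      ultimately show "\<exists>j. 1 \<le> j \<and> j < k \<and> S k \<omega> = S j \<omega>" by auto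
    qed
  qed

  have ap_unb: "\<exists>n. x \<le> ap n" if nsp: "\<not> summable p" for x
  proof (rule ccontr)
    assume "\<not> (\<exists>n. x \<le> ap n)"
    then have "\<And>n. (\<Sum>i<n. p i) \<le> x" unfolding ap_def by (auto simp: not_le less_imp_le)
    then have "summable p" by (rule summableI_nonneg_bounded[OF p_nn(1)])
    then show False using nsp by simp
  qed

  have ratio: "AE \<omega> in M. (\<lambda>n. real (num_colors B n \<omega>) / ap n) \<longlonglongrightarrow> 1" if nsp: "\<not> summable p"
  proof -
    define ns where "ns k = (LEAST n. real k ^ 2 \<le> ap n)" for k
    have ex: "\<exists>n. real k ^ 2 \<le> ap n" for k using ap_unb[OF nsp] by blast
    have ns_ge: "real k ^ 2 \<le> ap (ns k)" for k unfolding ns_def by (rule LeastI_ex[OF ex])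
    have ns_least: "ns k \<le> n" if "real k ^ 2 \<le> ap n" for k n unfolding ns_def by (rule Least_le[where P="\<lambda>n. real k ^ 2 \<le> ap n", OF that])
    have ap0: "ap 0 = 0" unfolding ap_def by simp
    have ns_le: "ap (ns k) \<le> real k ^ 2 + 1" if k: "k \<ge> 1" for k
    proof -
      have "1 \<le> real k ^ 2" using k by simp
      then have "ns k \<noteq> 0" using ns_ge[of k] ap0 by (metis not_one_le_zero order_trans)
      then have nk: "ns k = Suc (ns k - 1)" by simp
      have "\<not> real k ^ 2 \<le> ap (ns k - 1)"
        unfolding ns_def by (rule not_less_Least) (use \<open>ns k \<noteq> 0\<close> in \<open>simp add: ns_def\<close>)
      moreover have "ap (ns k) = ap (ns k - 1) + p (ns k - 1)"
        by (subst nk) (simp add: ap_def)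
      ultimately show ?thesis using p_nn(2)[of "ns k - 1"] by linarith
    qed
    have dev: "AE \<omega> in M. \<exists>K. \<forall>k\<ge>K. \<bar>real (num_colors B (ns k) \<omega>) - ap (ns k)\<bar> < ap (ns k) / (real m + 1)" for m
    proof -
      define c where "c k = (ap (ns k) / (real m + 1))^2" for k
      define Y where "Y k \<omega> = (\<Sum>i<ns k. indicator (A i) \<omega> - P.prob (A i) :: real)" for k \<omega>
      define E where "E k = {\<omega>\<in>space M. c k \<le> (Y k \<omega>)^2}" for k
      have E_ev[measurable]: "E k \<in> sets M" for k unfolding E_def Y_def by measurable
      have Ebd: "measure M (E k) \<le> (real m + 1)^2 * inverse (real k ^ 2)" if k: "k \<ge> 1" for k
      proof -
        have apk: "real k ^ 2 \<le> ap (ns k)" by (rule ns_ge)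
        have k2: "1 \<le> real k ^ 2" using k by simp
        have apos: "0 < ap (ns k)" using apk k2 by linarith
        have cpos: "0 < c k" unfolding c_def using apos by simp
        have k2p: "0 < real k ^ 2" using k2 by linarith
        have pp: "0 < ap (ns k) * real k ^ 2" using apos k2p by (rule mult_pos_pos)
        have "measure M (E k) \<le> (\<integral>\<omega>. (Y k \<omega>)^2 \<partial>M) / c k"
          unfolding E_def
          by (rule integral_Markov_inequality_measure[OF _ sets.top])
             (auto simp: Y_def P.sum_sq_int[OF A_ev] cpos)
        also have "\<dots> \<le> ap (ns k) / c k"
          using P.sum_moment[where n="ns k", OF A_ev indep] cpos
          by (simp add: Y_def pA ap_def divide_right_mono)
        also have "\<dots> = (real m + 1)^2 / ap (ns k)"
          unfolding c_def using apos by (simp add: field_simps power2_eq_square)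
        also have "\<dots> \<le> (real m + 1)^2 / real k ^ 2"
          by (rule divide_left_mono[OF apk _ pp]) simp
        finally show ?thesis by (simp add: divide_inverse)
      qed
      have summ: "summable (\<lambda>k. measure M (E k))"
        by (rule summable_comparison_test'[where N=1, OF summable_mult[OF inverse_power_summable[of 2]]])
           (use Ebd in auto)
      have "AE \<omega> in M. eventually (\<lambda>k. \<omega> \<in> space M - E k) sequentially"
        by (rule borel_cantelli_AE1) (auto simp: summ P.emeasure_eq_measure)
      then show ?thesis
      proof (rule AE_mp, intro AE_I2 impI)
        fix \<omega> assume \<omega>: "\<omega> \<in> space M" and ev: "eventually (\<lambda>k. \<omega> \<in> space M - E k) sequentially"
        then obtain K where K: "\<And>k. k \<ge> K \<Longrightarrow> \<omega> \<notin> E k" unfolding eventually_sequentially by auto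
        show "\<exists>K. \<forall>k\<ge>K. \<bar>real (num_colors B (ns k) \<omega>) - ap (ns k)\<bar> < ap (ns k) / (real m + 1)"
        proof (intro exI allI impI)
          fix k assume "K \<le> k"
          then have "\<not> c k \<le> (Y k \<omega>)^2" using K \<omega> unfolding E_def by auto
          then have lt: "\<bar>Y k \<omega>\<bar>^2 < (ap (ns k)/(real m+1))^2" unfolding c_def by simp
          have "\<bar>Y k \<omega>\<bar> < ap (ns k)/(real m+1)"
            by (rule power_less_imp_less_base[OF lt]) (simp add: ap_nn)
          moreover have "Y k \<omega> = real (num_colors B (ns k) \<omega>) - ap (ns k)"
            unfolding Y_def Csum[OF \<omega>] ap_def by (simp add: sum_subtractf pA)
          ultimately show "\<bar>real (num_colors B (ns k) \<omega>) - ap (ns k)\<bar> < ap (ns k) / (real m + 1)" by simp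
        qed
      qed
    qed
    have "AE \<omega> in M. \<forall>m. \<exists>K. \<forall>k\<ge>K. \<bar>real (num_colors B (ns k) \<omega>) - ap (ns k)\<bar> < ap (ns k) / (real m + 1)"
      unfolding AE_all_countable using dev by blast
    then show ?thesis
    proof (rule AE_mp, intro AE_I2 impI)
      fix \<omega> assume H: "\<forall>m. \<exists>K. \<forall>k\<ge>K. \<bar>real (num_colors B (ns k) \<omega>) - ap (ns k)\<bar> < ap (ns k) / (real m + 1)"
      show "(\<lambda>n. real (num_colors B n \<omega>) / ap n) \<longlonglongrightarrow> 1"
        by (rule det_ratio[OF ap_mono ap_nn colors_mono ns_ge ns_least ns_le]) (use H in blast)+
    qed
  qed

  have infty: "AE \<omega> in M. (SUP n. enat (num_colors B n \<omega>)) = \<infinity>" if nsp: "\<not> summable p"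
    using ratio[OF nsp]
  proof (rule AE_mp, intro AE_I2 impI)
    fix \<omega> assume lim: "(\<lambda>n. real (num_colors B n \<omega>) / ap n) \<longlonglongrightarrow> 1"
    have big: "\<exists>n. j < num_colors B n \<omega>" for j :: nat
    proof -
      have e1: "eventually (\<lambda>n. 1/2 < real (num_colors B n \<omega>) / ap n) sequentially"
        using order_tendstoD(1)[OF lim, of "1/2"] by simp
      obtain n0 where n0: "2 * (real j + 1) \<le> ap n0" using ap_unb[OF nsp] by blast
      have e2: "eventually (\<lambda>n. 2 * (real j + 1) \<le> ap n) sequentially"
        unfolding eventually_sequentially using n0 ap_mono by (meson mono_def order_trans)
      obtain n where n: "1/2 < real (num_colors B n \<omega>) / ap n" "2 * (real j + 1) \<le> ap n"
        using eventually_happens'[OF _ eventually_conj[OF e1 e2]] by auto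
      have apos: "0 < ap n" using n(2) by (smt (verit) of_nat_0_le_iff)
      have "ap n / 2 < real (num_colors B n \<omega>)" using n(1) apos by (simp add: field_simps)
      moreover have "real j + 1 \<le> ap n / 2" using n(2) by simp
      ultimately have "real j < real (num_colors B n \<omega>)" by linarith
      then show ?thesis by auto
    qed
    have "(SUP n. enat (num_colors B n \<omega>)) = top"
      unfolding SUP_eq_top_iff
    proof (intro allI impI)
      fix x :: enat assume "x < top"
      then obtain j where j: "x = enat j" by (cases x) auto
      obtain n where "j < num_colors B n \<omega>" using big by blast
      then show "\<exists>i\<in>UNIV. x < enat (num_colors B i \<omega>)" using j by auto
    qed
    then show "(SUP n. enat (num_colors B n \<omega>)) = \<infinity>" by (simp add: top_enat_def)
  qed

  have part3: "AE \<omega> in M. (\<exists>N. \<forall>n\<ge>N. n \<ge> 1 \<and> S n \<omega> \<notin> (\<lambda>m. S m \<omega>) ` {1..<n})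
                 \<and> (\<forall>c. finite {n. n \<ge> 1 \<and> S n \<omega> = c})
                 \<and> finite {c. card {n. n \<ge> 1 \<and> S n \<omega> = c} \<ge> 2}" if sq: "summable (\<lambda>n. 1 - p n)"
  proof -
    have pc: "measure M (space M - A n) = 1 - p n" for n
      using P.prob_compl[OF A_ev[of n]] pA by simp
    have "AE \<omega> in M. eventually (\<lambda>n. \<omega> \<in> space M - (space M - A n)) sequentially"
      by (rule borel_cantelli_AE1) (auto simp: pc sq P.emeasure_eq_measure)
    with Sbd show ?thesis
    proof (eventually_elim)
      case (elim \<omega>)
      then obtain N0 where N0: "\<And>n. n \<ge> N0 \<Longrightarrow> B n \<omega>" and \<omega>: "\<omega> \<in> space M"
        unfolding eventually_sequentially A_def by auto
      have new: "\<forall>n\<ge>Suc N0. n \<ge> 1 \<and> S n \<omega> \<notin> (\<lambda>m. S m \<omega>) ` {1..<n}"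
      proof (intro allI impI conjI)
        fix n assume n: "Suc N0 \<le> n"
        then show "n \<ge> 1" by simp
        have Bn: "B (n - 1) \<omega>" using N0 n by simp
        have Sn: "S n \<omega> = num_colors B n \<omega>" using trigger[of n \<omega>] n \<omega> Bn by simp
        have Cn: "num_colors B n \<omega> = num_colors B (n-1) \<omega> + 1"
          using num_colors_Suc[of B "n-1" \<omega>] Bn n by simp
        show "S n \<omega> \<notin> (\<lambda>m. S m \<omega>) ` {1..<n}"
        proof
          assume "S n \<omega> \<in> (\<lambda>m. S m \<omega>) ` {1..<n}"
          then obtain m where m: "1 \<le> m" "m < n" "S n \<omega> = S m \<omega>" by auto
          have "S m \<omega> \<le> num_colors B m \<omega>" using elim m by auto
          also have "\<dots> \<le> num_colors B (n-1) \<omega>" using m by (intro num_colors_mono) auto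
          finally show False using m Sn Cn by simp
        qed
      qed
      have fp: "\<forall>n\<ge>Suc N0. S n \<omega> \<notin> (\<lambda>m. S m \<omega>) ` {1..<n}" using new by auto
      show ?case using new fin_part[OF fp] by blast
    qed
  qed

  show ?thesis using part1 infty ratio part3 unfolding ap_def by blast
qed

end
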